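(* Let $S$ be a Clifford semigroup. Then the semigroup $T\mathbb{R}(S)$ of all normal cones in the category $\mathbb{R}(S)$ of principal right ideals of $S$ is anti-isomorphic to $S$, and the normal dual $N^*\mathbb{R}(S)$ of $\mathbb{R}(S)$ is isomorphic (as a normal category) to $\mathbb{L}(S)$.
   Context: A Clifford semigroup is a semigroup that is a semilattice of groups; equivalently, a regular semigroup whose idempotents are central. $E(S)$ denotes the set of idempotents. The category $\mathbb{L}(S)$ has objects $Se$, $e\in E(S)$, morphisms $\rho(e,u,f)\colon Se\to Sf$, $x\mapsto xu$, $u\in eSf$, composed left to right. The category $\mathbb{R}(S)$ has objects $eS$, $e\in E(S)$, morphisms $\lambda(e,u,f)\colon eS\to fS$, $x\mapsto ux$, for $u\in fSe$ (determined by domain, codomain and function), with composition $\lambda(e,u,f)\lambda(f,v,h)=\lambda(e,vu,h)$ and inclusions $\lambda(e,e,f)$ for $eS\subseteq fS$. A normal cone with apex $c$ in $\mathbb{R}(S)$ is a family $\gamma(a)\colon a\to c$ indexed by objects such that (inclusion $a\to b$)$\gamma(b)=\gamma(a)$ whenever $a\subseteq b$ and some $\gamma(a)$ is an isomorphism. The epimorphic component of $\lambda(e,u,f)$ is $\lambda(e,u,g)$ with $g\in E(S)$, $gS=uS$; $T\mathbb{R}(S)$ is the semigroup of normal cones with product $(\gamma\cdot\delta)(a)=\gamma(a)\,\delta(c_\gamma)^\circ$, $c_\gamma$ the apex of $\gamma$. For $\gamma$ with apex $c$ and an epimorphism $h\colon c\to c'$, $\gamma\ast h$ is the cone $a\mapsto\gamma(a)h$.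 The normal dual $N^*\mathbb{R}(S)$ is the category whose objects are the functors $H(\gamma;-)\colon\mathbb{R}(S)\to\mathbf{Set}$, $\gamma\in T\mathbb{R}(S)$, with $H(\gamma;d)=\{\gamma\ast f^\circ : f\colon c_\gamma\to d\}$ and $H(\gamma;g)\colon\gamma\ast f^\circ\mapsto\gamma\ast(fg)^\circ$, and whose morphisms are natural transformations; it carries a natural normal category structure. *)

theory Defs
  imports "HOL-Library.FuncSet"
begin

(* The semigroup S is the whole type 'a :: semigroup_mult. *)

definition idem :: "'a::semigroup_mult \<Rightarrow> bool" where
  "idem e \<longleftrightarrow> e * e = e"

definition clifford_semigroup :: "'a::semigroup_mult itself \<Rightarrow> bool" where
  "clifford_semigroup T \<longleftrightarrow>
     (\<forall>x::'a. \<exists>y. x * y * x = x) \<and> (\<forall>e::'a. \<forall>x. idem e \<longrightarrow> e * x = x * e)"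

definition rId :: "'a::semigroup_mult \<Rightarrow> 'a set" where
  "rId u = {u * s | s. True}"

definition lId :: "'a::semigroup_mult \<Rightarrow> 'a set" where
  "lId u = {s * u | s. True}"

(* morphisms of the concrete categories: (domain, codomain, function restricted to domain) *)
type_synonym 'a mor = "'a set \<times> 'a set \<times> ('a \<Rightarrow> 'a)"
type_synonym 'a cone = "'a set \<Rightarrow> 'a mor"

definition msrc :: "'a mor \<Rightarrow> 'a set" where "msrc m = fst m"
definition mtgt :: "'a mor \<Rightarrow> 'a set" where "mtgt m = fst (snd m)"
definition mfun :: "'a mor \<Rightarrow> 'a \<Rightarrow> 'a" where "mfun m = snd (snd m)"

(* composition, written left to right *)
definition mcomp :: "'a mor \<Rightarrow> 'a mor \<Rightarrow> 'a mor" where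
  "mcomp m n = (msrc m, mtgt n, restrict (mfun n \<circ> mfun m) (msrc m))"

definition minc :: "'a set \<Rightarrow> 'a set \<Rightarrow> 'a mor" where
  "minc A B = (A, B, restrict id A)"

definition lam :: "'a::semigroup_mult \<Rightarrow> 'a \<Rightarrow> 'a \<Rightarrow> 'a mor" where
  "lam e u f = (rId e, rId f, restrict (\<lambda>x. u * x) (rId e))"

definition rho :: "'a::semigroup_mult \<Rightarrow> 'a \<Rightarrow> 'a \<Rightarrow> 'a mor" where
  "rho e u f = (lId e, lId f, restrict (\<lambda>x. x * u) (lId e))"

definition R_obj :: "'a::semigroup_mult set set" where
  "R_obj = {rId e | e. idem e}"

definition R_hom :: "'a::semigroup_mult set \<Rightarrow> 'a set \<Rightarrow> 'a mor set" where
  "R_hom A B = {lam e u f | e u f. idem e \<and> idem f \<and> (\<exists>s. u = f * s * e)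
                  \<and> A = rId e \<and> B = rId f}"

definition R_mor :: "'a::semigroup_mult mor set" where
  "R_mor = (\<Union>A\<in>R_obj. \<Union>B\<in>R_obj. R_hom A B)"

definition R_iso :: "'a::semigroup_mult mor \<Rightarrow> bool" where
  "R_iso m \<longleftrightarrow> (\<exists>A\<in>R_obj. \<exists>B\<in>R_obj. \<exists>n. m \<in> R_hom A B \<and> n \<in> R_hom B A
                  \<and> mcomp m n = minc A A \<and> mcomp n m = minc B B)"

definition normal_cone :: "'a::semigroup_mult cone \<Rightarrow> 'a set \<Rightarrow> bool" where
  "normal_cone \<gamma> c \<longleftrightarrow> c \<in> R_obj
     \<and> (\<forall>a. a \<notin> R_obj \<longrightarrow> \<gamma> a = undefined)
     \<and> (\<forall>a\<in>R_obj. \<gamma> a \<in> R_hom a c)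
     \<and> (\<forall>a\<in>R_obj. \<forall>b\<in>R_obj. a \<subseteq> b \<longrightarrow> mcomp (minc a b) (\<gamma> b) = \<gamma> a)
     \<and> (\<exists>a\<in>R_obj. R_iso (\<gamma> a))"

definition TR :: "'a::semigroup_mult cone set" where
  "TR = {\<gamma>. \<exists>c. normal_cone \<gamma> c}"

definition apex :: "'a::semigroup_mult cone \<Rightarrow> 'a set" where
  "apex \<gamma> = (THE c. normal_cone \<gamma> c)"

definition epi_comp :: "'a::semigroup_mult mor \<Rightarrow> 'a mor" where
  "epi_comp m = (THE m'. \<exists>e u f g. idem e \<and> idem f \<and> idem g \<and> (\<exists>s. u = f * s * e)
                   \<and> m = lam e u f \<and> rId g = rId u \<and> m' = lam e u g)"

definition cone_mult :: "'a::semigroup_mult cone \<Rightarrow> 'a cone \<Rightarrow> 'a cone" where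
  "cone_mult \<gamma> \<delta> = (\<lambda>a. if a \<in> R_obj then mcomp (\<gamma> a) (epi_comp (\<delta> (apex \<gamma>))) else undefined)"

definition cone_star :: "'a::semigroup_mult cone \<Rightarrow> 'a mor \<Rightarrow> 'a cone" where
  "cone_star \<gamma> h = (\<lambda>a. if a \<in> R_obj then mcomp (\<gamma> a) h else undefined)"

definition Hset :: "'a::semigroup_mult cone \<Rightarrow> 'a set \<Rightarrow> 'a cone set" where
  "Hset \<gamma> d = {cone_star \<gamma> (epi_comp f) | f. f \<in> R_hom (apex \<gamma>) d}"

definition Hmap :: "'a::semigroup_mult cone \<Rightarrow> 'a mor \<Rightarrow> 'a cone \<Rightarrow> 'a cone" where
  "Hmap \<gamma> g = restrict
     (\<lambda>x. cone_star \<gamma> (epi_comp (mcomp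
            (SOME f. f \<in> R_hom (apex \<gamma>) (msrc g) \<and> x = cone_star \<gamma> (epi_comp f)) g)))
     (Hset \<gamma> (msrc g))"

(* a Set-valued functor on R(S): (object part, morphism part) *)
type_synonym 'a nobj = "('a set \<Rightarrow> 'a cone set) \<times> ('a mor \<Rightarrow> 'a cone \<Rightarrow> 'a cone)"
(* a natural transformation: (source functor, target functor, components) *)
type_synonym 'a nmor = "'a nobj \<times> 'a nobj \<times> ('a set \<Rightarrow> 'a cone \<Rightarrow> 'a cone)"

definition Hfun :: "'a::semigroup_mult cone \<Rightarrow> 'a nobj" where
  "Hfun \<gamma> = ((\<lambda>d. if d \<in> R_obj then Hset \<gamma> d else undefined),
              (\<lambda>g. if g \<in> R_mor then Hmap \<gamma> g else undefined))"

definition N_obj :: "'a::semigroup_mult nobj set" where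
  "N_obj = Hfun ` TR"

definition N_hom :: "'a::semigroup_mult nobj \<Rightarrow> 'a nobj \<Rightarrow> 'a nmor set" where
  "N_hom F G = {(F, G, \<sigma>) | \<sigma>.
      (\<forall>d. d \<notin> R_obj \<longrightarrow> \<sigma> d = undefined)
    \<and> (\<forall>d\<in>R_obj. \<sigma> d \<in> extensional (fst F d) \<and> \<sigma> d \<in> fst F d \<rightarrow> fst G d)
    \<and> (\<forall>d\<in>R_obj. \<forall>d'\<in>R_obj. \<forall>g\<in>R_hom d d'. \<forall>x\<in>fst F d.
          snd G g (\<sigma> d x) = \<sigma> d' (snd F g x))}"

definition N_mor :: "'a::semigroup_mult nmor set" where
  "N_mor = (\<Union>F\<in>N_obj. \<Union>G\<in>N_obj. N_hom F G)"

(* composition of natural transformations, left to right *)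
definition N_comp :: "'a::semigroup_mult nmor \<Rightarrow> 'a nmor \<Rightarrow> 'a nmor" where
  "N_comp s t = (fst s, fst (snd t),
     \<lambda>d. if d \<in> R_obj then restrict (snd (snd t) d \<circ> snd (snd s) d) (fst (fst s) d) else undefined)"

(* normal category structure on N*R(S): inclusions are the natural transformations
   all of whose components are set inclusions *)
definition N_le :: "'a::semigroup_mult nobj \<Rightarrow> 'a nobj \<Rightarrow> bool" where
  "N_le F G \<longleftrightarrow> (\<forall>d\<in>R_obj. fst F d \<subseteq> fst G d)"

definition N_inc :: "'a::semigroup_mult nobj \<Rightarrow> 'a nobj \<Rightarrow> 'a nmor" where
  "N_inc F G = (F, G, \<lambda>d. if d \<in> R_obj then restrict id (fst F d) else undefined)"

definition L_obj :: "'a::semigroup_mult set set" where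
  "L_obj = {lId e | e. idem e}"

definition L_hom :: "'a::semigroup_mult set \<Rightarrow> 'a set \<Rightarrow> 'a mor set" where
  "L_hom A B = {rho e u f | e u f. idem e \<and> idem f \<and> (\<exists>s. u = e * s * f)
                  \<and> A = lId e \<and> B = lId f}"

definition L_mor :: "'a::semigroup_mult mor set" where
  "L_mor = (\<Union>A\<in>L_obj. \<Union>B\<in>L_obj. L_hom A B)"

definition normal_cat_iso :: "('a::semigroup_mult set \<Rightarrow> 'a nobj) \<Rightarrow> ('a mor \<Rightarrow> 'a nmor) \<Rightarrow> bool" where
  "normal_cat_iso FO FM \<longleftrightarrow>
      bij_betw FO L_obj N_obj \<and> bij_betw FM L_mor N_mor
    \<and> (\<forall>A\<in>L_obj. \<forall>B\<in>L_obj. \<forall>m\<in>L_hom A B. FM m \<in> N_hom (FO A) (FO B))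
    \<and> (\<forall>A\<in>L_obj. \<forall>B\<in>L_obj. \<forall>C\<in>L_obj. \<forall>m\<in>L_hom A B. \<forall>n\<in>L_hom B C.
          FM (mcomp m n) = N_comp (FM m) (FM n))
    \<and> (\<forall>A\<in>L_obj. \<forall>B\<in>L_obj. (A \<subseteq> B \<longleftrightarrow> N_le (FO A) (FO B))
          \<and> (A \<subseteq> B \<longrightarrow> FM (minc A B) = N_inc (FO A) (FO B)))"

end

theory Submission
  imports Defs
begin


definition xi :: "'a::semigroup_mult \<Rightarrow> 'a" where
  "xi x = (let y = (SOME y. x*y*x = x) in y*x*y)"
definition EE :: "'a::semigroup_mult \<Rightarrow> 'a" where "EE x = x * xi x"
definition phi :: "'a::semigroup_mult \<Rightarrow> 'a cone" where
  "phi u = (\<lambda>a. if a \<in> R_obj then (a, rId (EE u), restrict (\<lambda>x. u*x) a) else undefined)"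

locale cliff =
  fixes T :: "'a::semigroup_mult itself"
  assumes cl: "clifford_semigroup TYPE('a)"
begin

lemma central: "idem (e::'a) \<Longrightarrow> e * x = x * e"
  using cl unfolding clifford_semigroup_def by blast

lemma reg: "\<exists>y. (x::'a) * y * x = x"
  using cl unfolding clifford_semigroup_def by blast

lemma xi_props:
  fixes x :: 'a
  shows "x * xi x * x = x" "xi x * x * xi x = xi x" "x * xi x = xi x * x"
proof -
  define y where "y = (SOME y. x*y*x = x)"
  have y: "x*y*x = x" unfolding y_def using reg by (rule someI_ex)
  have xi: "xi x = y*x*y" unfolding xi_def y_def Let_def by simp
  have ie: "idem (x*y)" unfolding idem_def using y by (metis mult.assoc)
  have if': "idem (y*x)" unfolding idem_def using y by (metis mult.assoc)
  have c1: "\<And>z. x*y*z = z*(x*y)" using central[OF ie] .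
  have c2: "\<And>z. y*x*z = z*(y*x)" using central[OF if'] .
  have "x*y = y*x*(x*y)" using c2[of x] y by (metis mult.assoc)
  moreover have "y*x = y*x*(x*y)" using c1[of x] y by (metis mult.assoc)
  ultimately have eq: "x*y = y*x" by simp
  show "x * xi x * x = x" unfolding xi using y by (metis mult.assoc)
  show "xi x * x * xi x = xi x" unfolding xi using y by (metis mult.assoc)
  show "x * xi x = xi x * x" unfolding xi using y eq by (metis mult.assoc)
qed


lemma EE_idem: "idem (EE (x::'a))"
  unfolding idem_def EE_def by (metis mult.assoc xi_props(1))
lemma EE_l: "EE (x::'a) * x = x" unfolding EE_def by (metis mult.assoc xi_props(1))
lemma EE_r: "(x::'a) * EE x = x" unfolding EE_def
  by (metis xi_props(1) xi_props(3) mult.assoc)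
lemma xi_l: "EE (x::'a) * xi x = xi x" unfolding EE_def
  by (metis xi_props(2) xi_props(3))
lemma xi_r: "xi (x::'a) * EE x = xi x" unfolding EE_def by (metis mult.assoc xi_props(2))
lemma xi_x: "xi (x::'a) * x = EE x" unfolding EE_def using xi_props(3)[of x] by simp
lemma EE_of_idem: "idem (e::'a) \<Longrightarrow> EE e = e"
proof -
  assume ie: "idem e"
  have 1: "e = EE e * e" using EE_l by simp
  have 2: "EE e = e * EE e" unfolding EE_def using ie unfolding idem_def by (metis mult.assoc)
  have 3: "e * EE e = EE e * e" using central[OF ie] by simp
  show ?thesis using 1 2 3 by simp
qed

lemma rId_mem: "x \<in> rId (e::'a) \<longleftrightarrow> (\<exists>s. x = e * s)" unfolding rId_def by auto
lemma lId_mem: "x \<in> lId (e::'a) \<longleftrightarrow> (\<exists>s. x = s * e)" unfolding lId_def by auto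
lemma rId_idem: "idem (e::'a) \<Longrightarrow> x \<in> rId e \<longleftrightarrow> e * x = x"
  unfolding rId_mem idem_def by (metis mult.assoc)
lemma lId_idem: "idem (e::'a) \<Longrightarrow> x \<in> lId e \<longleftrightarrow> x * e = x"
  unfolding lId_mem idem_def by (metis mult.assoc)
lemma lId_rId: "idem (e::'a) \<Longrightarrow> lId e = rId e"
proof -
  assume ie: "idem e"
  show ?thesis by (rule set_eqI) (simp add: rId_idem[OF ie] lId_idem[OF ie] central[OF ie])
qed
lemma self_rId: "idem (e::'a) \<Longrightarrow> e \<in> rId e" using rId_idem idem_def by metis
lemma rId_inj: "idem (e::'a) \<Longrightarrow> idem f \<Longrightarrow> rId e = rId f \<Longrightarrow> e = f"
proof -
  assume a: "idem e" "idem f" "rId e = rId f"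
  have 1: "f * e = e" using self_rId[OF a(1)] a rId_idem by blast
  have 2: "e * f = f" using self_rId[OF a(2)] a rId_idem by blast
  have "e * f = f * e" using central[OF a(1)] by simp
  then show ?thesis using 1 2 by simp
qed
lemma lId_inj: "idem (e::'a) \<Longrightarrow> idem f \<Longrightarrow> lId e = lId f \<Longrightarrow> e = f"
  using rId_inj lId_rId by metis
lemma rId_mult_sub: "rId ((a::'a) * b) \<subseteq> rId a" unfolding rId_def by (auto simp: mult.assoc)
lemma rId_EE: "rId (EE (x::'a)) = rId x"
proof
  show "rId (EE x) \<subseteq> rId x" unfolding EE_def by (rule rId_mult_sub)
  show "rId x \<subseteq> rId (EE x)" using EE_l[of x] rId_mult_sub[of "EE x" x] by simp
qed


lemma R_objI: "idem (e::'a) \<Longrightarrow> rId e \<in> R_obj" unfolding R_obj_def by blast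
lemma R_objE: "(a::'a set) \<in> R_obj \<Longrightarrow> (\<And>e. idem e \<Longrightarrow> a = rId e \<Longrightarrow> P) \<Longrightarrow> P"
  unfolding R_obj_def by blast

lemma lam_eq:
  assumes "idem (e::'a)" "idem e'" "idem f" "idem f'" "u * e = u" "u' * e' = u'"
    "lam e u f = lam e' u' f'"
  shows "e = e' \<and> f = f' \<and> u = u'"
proof -
  have r: "rId e = rId e'" "rId f = rId f'" "restrict (\<lambda>x. u*x) (rId e) = restrict (\<lambda>x. u'*x) (rId e')"
    using assms(7) unfolding lam_def by auto
  have ee: "e = e'" using rId_inj assms r by blast
  have "u * e = u' * e" using fun_cong[OF r(3), of e] self_rId[OF assms(1)] ee by simp
  then have "u = u'" using ee assms(5,6) by simp
  then show ?thesis using ee rId_inj assms r by auto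
qed

lemma R_hom_char:
  assumes "idem (e::'a)" "idem h" "m \<in> R_hom (rId e) (rId h)"
  shows "\<exists>v. m = lam e v h \<and> h * v = v \<and> v * e = v"
proof -
  obtain e' u f s where x: "idem e'" "idem f" "u = f*s*e'" "m = lam e' u f" "rId e = rId e'" "rId h = rId f"
    using assms(3) unfolding R_hom_def by blast
  have "e' = e" "f = h" using rId_inj x assms by metis+
  moreover have "h * u = u" "u * e = u" using x assms calculation unfolding idem_def
    by (metis mult.assoc)+
  ultimately show ?thesis using x by blast
qed

lemma R_homI:
  assumes "idem (e::'a)" "idem h" "h * v = v" "v * e = v"
  shows "lam e v h \<in> R_hom (rId e) (rId h)"
  unfolding R_hom_def using assms by (smt (verit) mem_Collect_eq)

lemma mcomp_lam:
  assumes "idem (e::'a)" "f * u = u"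
  shows "mcomp (lam e u f) (lam f v h) = lam e (v*u) h"
proof -
  have "restrict (restrict ((*) v) (rId f) \<circ> restrict ((*) u) (rId e)) (rId e)
      = restrict ((*) (v*u)) (rId e)"
  proof (rule ext)
    fix x show "restrict (restrict ((*) v) (rId f) \<circ> restrict ((*) u) (rId e)) (rId e) x
      = restrict ((*) (v*u)) (rId e) x"
    proof (cases "x \<in> rId e")
      case True
      have "u * x \<in> rId f" unfolding rId_mem using assms(2) by (metis mult.assoc)
      then show ?thesis using True by (simp add: mult.assoc)
    qed simp
  qed
  then show ?thesis unfolding mcomp_def lam_def msrc_def mtgt_def mfun_def by simp
qed

lemma epi_comp_lam:
  assumes "idem (e::'a)" "idem f" "f * u = u" "u * e = u"
  shows "epi_comp (lam e u f) = lam e u (EE u)"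
  unfolding epi_comp_def
proof (rule the_equality)
  show "\<exists>e' u' f' g. idem e' \<and> idem f' \<and> idem g \<and> (\<exists>s. u' = f' * s * e') \<and>
      lam e u f = lam e' u' f' \<and> rId g = rId u' \<and> lam e u (EE u) = lam e' u' g"
    apply (rule exI[of _ e], rule exI[of _ u], rule exI[of _ f], rule exI[of _ "EE u"])
    using assms EE_idem rId_EE by (metis mult.assoc)
next
  fix m' assume "\<exists>e' u' f' g. idem e' \<and> idem f' \<and> idem g \<and> (\<exists>s. u' = f' * s * e') \<and>
      lam e u f = lam e' u' f' \<and> rId g = rId u' \<and> m' = lam e' u' g"
  then obtain e' u' f' g s where x: "idem e'" "idem f'" "idem g" "u' = f' * s * e'"
    "lam e u f = lam e' u' f'" "rId g = rId u'" "m' = lam e' u' g" by blast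
  have "u' * e' = u'" using x unfolding idem_def by (simp add: mult.assoc)
  then have "e = e' \<and> u = u'" using lam_eq[OF assms(1) x(1) assms(2) x(2) assms(4)] x by blast
  moreover have "g = EE u" using rId_inj[OF x(3) EE_idem] x rId_EE calculation by metis
  ultimately show "m' = lam e u (EE u)" using x by simp
qed


lemma R_hom_src_tgt: "m \<in> R_hom a c \<Longrightarrow> msrc m = a \<and> mtgt m = (c::'a set)"
  unfolding R_hom_def lam_def msrc_def mtgt_def by auto

lemma phi_lam: "idem (e::'a) \<Longrightarrow> phi u (rId e) = lam e (u*e) (EE u)"
proof -
  assume ie: "idem e"
  have "restrict ((*) u) (rId e) = restrict ((*) (u*e)) (rId e)"
    by (rule ext) (simp add: rId_idem[OF ie] mult.assoc)
  then show ?thesis unfolding phi_def lam_def using R_objI[OF ie] by simp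
qed

lemma phi_hom: "a \<in> R_obj \<Longrightarrow> phi (u::'a) a \<in> R_hom a (rId (EE u))"
proof (erule R_objE)
  fix e assume ie: "idem e" and a: "a = rId e"
  have "lam e (u*e) (EE u) \<in> R_hom (rId e) (rId (EE u))"
    apply (rule R_homI[OF ie EE_idem])
     apply (simp add: mult.assoc[symmetric] EE_l)
    using ie unfolding idem_def by (simp add: mult.assoc)
  then show ?thesis using a phi_lam[OF ie] by simp
qed

lemma lam_id: "idem (g::'a) \<Longrightarrow> lam g g g = minc (rId g) (rId g)"
proof -
  assume ig: "idem g"
  have "restrict ((*) g) (rId g) = restrict id (rId g)"
    by (rule ext) (simp add: rId_idem[OF ig])
  then show ?thesis unfolding lam_def minc_def by simp
qed

lemma phi_cone: "normal_cone (phi (u::'a)) (rId (EE u))"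
proof -
  have A: "rId (EE u) \<in> R_obj" by (rule R_objI[OF EE_idem])
  have B: "\<forall>a. a \<notin> R_obj \<longrightarrow> phi u a = undefined" unfolding phi_def by simp
  have C: "\<forall>a\<in>R_obj. phi u a \<in> R_hom a (rId (EE u))" using phi_hom by blast
  have D: "\<forall>a\<in>R_obj. \<forall>b\<in>R_obj. a \<subseteq> b \<longrightarrow> mcomp (minc a b) (phi u b) = phi u a"
  proof (intro ballI impI)
    fix a b :: "'a set" assume ab: "a \<in> R_obj" "b \<in> R_obj" "a \<subseteq> b"
    have "restrict (restrict ((*) u) b \<circ> restrict id a) a = restrict ((*) u) a"
      by (rule ext) (use ab in auto)
    then show "mcomp (minc a b) (phi u b) = phi u a"
      unfolding mcomp_def minc_def phi_def msrc_def mtgt_def mfun_def using ab by simp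
  qed
  define g where "g = EE u"
  have ig: "idem g" unfolding g_def by (rule EE_idem)
  have m: "phi u (rId g) = lam g u g" using phi_lam[OF ig] EE_r unfolding g_def by simp
  have mh: "lam g u g \<in> R_hom (rId g) (rId g)" using phi_hom[OF R_objI[OF ig], of u] m unfolding g_def by simp
  have nh: "lam g (xi u) g \<in> R_hom (rId g) (rId g)"
    using R_homI[OF ig ig] xi_l xi_r unfolding g_def by blast
  have gu: "g * u = u" unfolding g_def by (rule EE_l)
  have c1: "mcomp (lam g u g) (lam g (xi u) g) = minc (rId g) (rId g)"
    using mcomp_lam[OF ig gu, where v="xi u" and h=g] xi_x[of u] lam_id[OF ig] unfolding g_def by simp
  have gx: "g * xi u = xi u" unfolding g_def by (rule xi_l)
  have c2: "mcomp (lam g (xi u) g) (lam g u g) = minc (rId g) (rId g)"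
    using mcomp_lam[OF ig gx, where v=u and h=g] lam_id[OF ig] unfolding g_def EE_def by simp
  have E: "\<exists>a\<in>R_obj. R_iso (phi u a)"
    apply (rule bexI[of _ "rId g"])
    unfolding R_iso_def m
     apply (rule bexI[of _ "rId g"], rule bexI[of _ "rId g"])
    using mh nh c1 c2 R_objI[OF ig] by blast+
  show ?thesis unfolding normal_cone_def using A B C D E by blast
qed

lemma nc_parts:
  assumes "normal_cone \<gamma> c"
  shows "c \<in> R_obj" "\<And>a. a \<notin> R_obj \<Longrightarrow> \<gamma> a = undefined"
    "\<And>a. a \<in> R_obj \<Longrightarrow> \<gamma> a \<in> R_hom a c"
    "\<And>a b. a \<in> R_obj \<Longrightarrow> b \<in> R_obj \<Longrightarrow> a \<subseteq> b \<Longrightarrow> mcomp (minc a b) (\<gamma> b) = \<gamma> a"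
    "\<exists>a\<in>R_obj. R_iso (\<gamma> a)"
  using assms unfolding normal_cone_def by simp_all

lemma apex_unique: "normal_cone \<gamma> c \<Longrightarrow> normal_cone \<gamma> c' \<Longrightarrow> c = (c'::'a set)"
proof -
  assume n1: "normal_cone \<gamma> c" and n2: "normal_cone \<gamma> c'"
  obtain a :: "'a set" where a: "a \<in> R_obj" using nc_parts(5)[OF n1] by blast
  have "\<gamma> a \<in> R_hom a c" "\<gamma> a \<in> R_hom a c'" using nc_parts(3)[OF n1 a] nc_parts(3)[OF n2 a] by auto
  then show ?thesis using R_hom_src_tgt[of "\<gamma> a" a c] R_hom_src_tgt[of "\<gamma> a" a c'] by simp
qed

lemma apex_phi: "apex (phi (u::'a)) = rId (EE u)"
  unfolding apex_def
  apply (rule the_equality)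
   apply (rule phi_cone)
  using apex_unique phi_cone by blast

lemma EE_unit:
  assumes "idem (g::'a)" "g * v = v" "v * w = g"
  shows "EE v = g"
proof -
  have 1: "g = EE v * g"
  proof -
    have "EE v * g = (EE v * v) * w" using assms(3) by (simp add: mult.assoc)
    then show ?thesis using EE_l[of v] assms(3) by simp
  qed
  have 2: "EE v = g * EE v"
  proof -
    have "g * EE v = (g * v) * xi v" unfolding EE_def by (simp add: mult.assoc)
    then show ?thesis using assms(2) unfolding EE_def by simp
  qed
  show ?thesis using 1 2 central[OF assms(1), of "EE v"] by simp
qed

lemma mfun_mcomp_at: "x \<in> msrc m \<Longrightarrow> mfun (mcomp m n) x = mfun n (mfun m x)"
  unfolding mcomp_def mfun_def msrc_def by simp

lemma TR_phi: "\<gamma> \<in> TR \<Longrightarrow> \<exists>u::'a. \<gamma> = phi u"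
proof -
  assume "\<gamma> \<in> TR"
  then obtain c where nc: "normal_cone \<gamma> c" unfolding TR_def by blast
  then obtain a0 :: "'a set" where a0: "a0 \<in> R_obj" "R_iso (\<gamma> a0)" using nc_parts(5) by blast
  obtain A B n where iso: "A \<in> R_obj" "B \<in> R_obj" "\<gamma> a0 \<in> R_hom A B" "n \<in> R_hom B A"
     "mcomp (\<gamma> a0) n = minc A A" "mcomp n (\<gamma> a0) = minc B B"
    using a0(2) unfolding R_iso_def
    apply (elim bexE exE conjE)
    apply (rule that)
    by assumption+
  have "\<gamma> a0 \<in> R_hom a0 c" using nc_parts(3)[OF nc a0(1)] .
  then have AB: "A = a0" "B = c" using R_hom_src_tgt[of "\<gamma> a0" A B] R_hom_src_tgt[of "\<gamma> a0" a0 c] iso(3) by simp_all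
  obtain g where g: "idem g" "A = rId g" using iso(1) by (rule R_objE)
  obtain f where f: "idem f" "B = rId f" using iso(2) by (rule R_objE)
  have h1: "\<gamma> a0 \<in> R_hom (rId g) (rId f)" using iso(3) g(2) f(2) by simp
  have h2: "n \<in> R_hom (rId f) (rId g)" using iso(4) g(2) f(2) by simp
  obtain v where v: "\<gamma> a0 = lam g v f" "f * v = v" "v * g = v" using R_hom_char[OF g(1) f(1) h1] by blast
  obtain w where w: "n = lam f w g" "g * w = w" "w * f = w" using R_hom_char[OF f(1) g(1) h2] by blast
  have "mfun (mcomp (\<gamma> a0) n) g = g" using iso(5) self_rId[OF g(1)] g unfolding minc_def mfun_def by simp
  then have wv: "w * v = g" using self_rId[OF g(1)] v w rId_idem[OF f(1), of v] unfolding lam_def mcomp_def mfun_def msrc_def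
    by (simp add: mult.assoc)
  have "mfun (mcomp n (\<gamma> a0)) f = f" using iso(6) self_rId[OF f(1)] f unfolding minc_def mfun_def by simp
  then have vw: "v * w = f" using self_rId[OF f(1)] v w rId_idem[OF g(1), of w] unfolding lam_def mcomp_def mfun_def msrc_def
    by (simp add: mult.assoc)
  have gfg: "g = f * g"
  proof -
    have "g = w * (f * v)" using wv v(2) by simp
    also have "\<dots> = (f * w) * v" using central[OF f(1), of w] by (simp add: mult.assoc[symmetric])
    also have "\<dots> = f * g" using wv by (simp add: mult.assoc)
    finally show ?thesis .
  qed
  have fgf: "f = g * f"
  proof -
    have "f = v * (g * w)" using vw w(2) by simp
    also have "\<dots> = (g * v) * w" using central[OF g(1), of v] by (simp add: mult.assoc[symmetric])
    also have "\<dots> = g * f" using vw by (simp add: mult.assoc)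
    finally show ?thesis .
  qed
  have gf: "g = f" using gfg fgf central[OF g(1), of f] by metis
  have Ev: "EE v = g" using EE_unit[OF g(1), of v w] v(2) vw unfolding gf by blast
  have ga0: "\<gamma> (rId g) = lam g v g" using v AB g gf by simp
  have c: "c = rId g" using AB f gf by simp
  show ?thesis
  proof (rule exI[of _ v], rule ext)
    fix a :: "'a set" show "\<gamma> a = phi v a"
    proof (cases "a \<in> R_obj")
      case False then show ?thesis using nc_parts(2)[OF nc False] unfolding phi_def by simp
    next
      case True
      then obtain e where e: "idem e" "a = rId e" by (rule R_objE)
      have "e*g*(e*g) = e*(g*e)*g" by (simp add: mult.assoc)
      also have "\<dots> = (e*e)*(g*g)" using central[OF g(1), of e] by (simp add: mult.assoc)
      also have "\<dots> = e*g" using e(1) g(1) unfolding idem_def by simp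
      finally have ieg: "idem (e*g)" unfolding idem_def .
      have b: "rId (e*g) \<in> R_obj" using R_objI[OF ieg] .
      have ba: "rId (e*g) \<subseteq> rId e" by (rule rId_mult_sub)
      have bg: "rId (e*g) \<subseteq> rId g" using rId_mult_sub[of g e] central[OF g(1), of e] by simp
      have "\<gamma> a \<in> R_hom a c" using nc_parts(3)[OF nc True] .
      then have "\<gamma> a \<in> R_hom (rId e) (rId g)" using e(2) c by simp
      then obtain p where p: "\<gamma> a = lam e p g" "g * p = p" "p * e = p"
        using R_hom_char[OF e(1) g(1)] by blast
      have eq1: "mcomp (minc (rId (e*g)) a) (\<gamma> a) = \<gamma> (rId (e*g))"
        using nc_parts(4)[OF nc b True] ba e by simp
      have eq2: "mcomp (minc (rId (e*g)) (rId g)) (\<gamma> (rId g)) = \<gamma> (rId (e*g))"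
        using nc_parts(4)[OF nc b R_objI[OF g(1)] bg] .
      have egm: "e*g \<in> rId (e*g)" using self_rId[OF ieg] .
      have "mfun (mcomp (minc (rId (e*g)) a) (\<gamma> a)) (e*g) = mfun (mcomp (minc (rId (e*g)) (rId g)) (\<gamma> (rId g))) (e*g)"
        using eq1 eq2 by simp
      then have "p * (e*g) = v * (e*g)"
        using egm subsetD[OF ba egm] subsetD[OF bg egm] p(1) ga0 e(2)
        unfolding mcomp_def minc_def mfun_def msrc_def mtgt_def lam_def by simp
      moreover have "p * (e*g) = p"
      proof -
        have "p * (e*g) = (p*e)*g" by (simp add: mult.assoc)
        also have "\<dots> = g * p" using p(3) central[OF g(1), of p] by simp
        finally show ?thesis using p(2) by simp
      qed
      moreover have "v * (e*g) = v * e"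
      proof -
        have "v * (e*g) = v * (g*e)" using central[OF g(1), of e] by simp
        also have "\<dots> = (v*g)*e" by (simp add: mult.assoc)
        finally show ?thesis using v(3) gf by simp
      qed
      ultimately have "p = v * e" by simp
      then show ?thesis using p e phi_lam[OF e(1), of v] Ev by simp
    qed
  qed
qed

lemma phi_inj: "inj (phi :: 'a \<Rightarrow> 'a cone)"
proof (rule injI)
  fix u u' :: 'a assume eq: "phi u = phi u'"
  have "apex (phi u) = apex (phi u')" using eq by simp
  then have g: "EE u = EE u'" using apex_phi rId_inj EE_idem by metis
  have "mfun (phi u (rId (EE u))) (EE u) = mfun (phi u' (rId (EE u))) (EE u)" using eq by simp
  then have "u * EE u = u' * EE u'" using g self_rId[OF EE_idem, of u] R_objI[OF EE_idem, of u]
    unfolding phi_def mfun_def by simp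
  then show "u = u'" using EE_r by simp
qed

lemma phi_bij: "bij_betw (phi :: 'a \<Rightarrow> 'a cone) UNIV TR"
  unfolding bij_betw_def using phi_inj TR_phi phi_cone unfolding TR_def by blast

lemma phi_anti: "phi ((x::'a) * y) = cone_mult (phi y) (phi x)"
proof -
  have ey: "idem (EE y)" by (rule EE_idem)
  have p1: "phi x (rId (EE y)) = lam (EE y) (x * EE y) (EE x)" using phi_lam[OF ey] .
  have ep: "epi_comp (phi x (rId (EE y))) = lam (EE y) (x * EE y) (EE (x * EE y))"
    unfolding p1 apply (rule epi_comp_lam[OF ey EE_idem])
     apply (simp add: EE_l mult.assoc[symmetric])
    using ey unfolding idem_def by (simp add: mult.assoc)
  have "rId (x * EE y) = rId (x*y)"
  proof
    show "rId (x * EE y) \<subseteq> rId (x*y)" unfolding EE_def by (metis mult.assoc rId_mult_sub)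
    show "rId (x * y) \<subseteq> rId (x * EE y)" using rId_mult_sub[of "x * EE y" y] EE_l[of y] by (simp add: mult.assoc)
  qed
  then have rr: "rId (EE (x * EE y)) = rId (EE (x*y))" using rId_EE by simp
  show ?thesis
  proof (rule ext)
    fix a :: "'a set" show "phi (x*y) a = cone_mult (phi y) (phi x) a"
    proof (cases "a \<in> R_obj")
      case False then show ?thesis unfolding phi_def cone_mult_def by simp
    next
      case True
      have "restrict (restrict ((*) (x * EE y)) (rId (EE y)) \<circ> restrict ((*) y) a) a = restrict ((*) (x*y)) a"
      proof (rule ext)
        fix z show "restrict (restrict ((*) (x * EE y)) (rId (EE y)) \<circ> restrict ((*) y) a) a z = restrict ((*) (x*y)) a z"
        proof (cases "z \<in> a")
          case True
          have "y * z \<in> rId (EE y)" using rId_idem[OF ey] EE_l[of y] by (simp add: mult.assoc[symmetric])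
          moreover have "x * EE y * y * z = x * y * z" using EE_l[of y] by (simp add: mult.assoc)
          ultimately show ?thesis using True by (simp add: mult.assoc[symmetric])
        qed simp
      qed
      then show ?thesis unfolding cone_mult_def apex_phi ep using True rr
        unfolding phi_def mcomp_def lam_def msrc_def mtgt_def mfun_def by simp
    qed
  qed
qed

end



definition idof :: "'a::semigroup_mult set \<Rightarrow> 'a" where "idof A = (SOME e. idem e \<and> A = lId e)"
definition FOd :: "'a::semigroup_mult set \<Rightarrow> 'a nobj" where "FOd A = Hfun (phi (idof A))"
definition psi :: "'a::semigroup_mult cone \<Rightarrow> 'a" where "psi = inv phi"
definition uof :: "'a::semigroup_mult mor \<Rightarrow> 'a" where "uof m = mfun m (idof (msrc m))"
definition FMd :: "'a::semigroup_mult mor \<Rightarrow> 'a nmor" where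
  "FMd m = (FOd (msrc m), FOd (mtgt m),
     \<lambda>d. if d \<in> R_obj then restrict (\<lambda>x. phi (psi x * uof m)) (fst (FOd (msrc m)) d) else undefined)"

definition sig :: "'a::semigroup_mult \<Rightarrow> 'a \<Rightarrow> 'a set \<Rightarrow> 'a cone \<Rightarrow> 'a cone" where
  "sig e u = (\<lambda>d. if d \<in> R_obj then restrict (\<lambda>x. phi (psi x * u)) (fst (FOd (lId e)) d) else undefined)"

context cliff begin

lemma psi_phi[simp]: "psi (phi (u::'a)) = u"
  unfolding psi_def using phi_inj by simp

lemma phi_eq[simp]: "phi (u::'a) = phi v \<longleftrightarrow> u = v"
  using phi_inj by (auto dest: injD)

lemma idof_lId: "idem (e::'a) \<Longrightarrow> idof (lId e) = e"
  unfolding idof_def by (rule some_equality) (auto dest: lId_inj)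

lemma L_objE: "(A::'a set) \<in> L_obj \<Longrightarrow> (\<And>e. idem e \<Longrightarrow> A = lId e \<Longrightarrow> P) \<Longrightarrow> P"
  unfolding L_obj_def by blast
lemma L_objI: "idem (e::'a) \<Longrightarrow> lId e \<in> L_obj" unfolding L_obj_def by blast

lemma R_morE: "(g::'a mor) \<in> R_mor \<Longrightarrow> (\<And>h k t. idem h \<Longrightarrow> idem k \<Longrightarrow> g = lam h t k \<Longrightarrow> k * t = t \<Longrightarrow> t * h = t \<Longrightarrow> P) \<Longrightarrow> P"
proof -
  assume g: "g \<in> R_mor" and H: "\<And>h k t. idem h \<Longrightarrow> idem k \<Longrightarrow> g = lam h t k \<Longrightarrow> k * t = t \<Longrightarrow> t * h = t \<Longrightarrow> P"
  obtain A B where AB: "A \<in> R_obj" "B \<in> R_obj" "g \<in> R_hom A B" using g unfolding R_mor_def by blast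
  obtain h where h: "idem h" "A = rId h" using AB(1) by (rule R_objE)
  obtain k where k: "idem k" "B = rId k" using AB(2) by (rule R_objE)
  have "g \<in> R_hom (rId h) (rId k)" using AB h k by simp
  then obtain t where "g = lam h t k" "k * t = t" "t * h = t" using R_hom_char[OF h(1) k(1)] by blast
  then show P using H h k by blast
qed

lemma R_morI: "d \<in> R_obj \<Longrightarrow> d' \<in> R_obj \<Longrightarrow> (g::'a mor) \<in> R_hom d d' \<Longrightarrow> g \<in> R_mor"
  unfolding R_mor_def by blast

lemma cone_star_phi:
  assumes "v * EE u = (v::'a)"
  shows "cone_star (phi u) (lam (EE u) v (EE v)) = phi (v*u)"
proof (rule ext)
  fix a :: "'a set"
  have r: "rId (EE v) = rId (EE (v*u))"
  proof -
    have "rId v \<subseteq> rId (v*u)" using rId_mult_sub[of "v*u" "xi u"] assms unfolding EE_def by (simp add: mult.assoc)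
    then show ?thesis using rId_EE rId_mult_sub[of v u] by auto
  qed
  show "cone_star (phi u) (lam (EE u) v (EE v)) a = phi (v*u) a"
  proof (cases "a \<in> R_obj")
    case False then show ?thesis unfolding cone_star_def phi_def by simp
  next
    case True
    have "restrict (restrict ((*) v) (rId (EE u)) \<circ> restrict ((*) u) a) a = restrict ((*) (v*u)) a"
    proof (rule ext)
      fix z show "restrict (restrict ((*) v) (rId (EE u)) \<circ> restrict ((*) u) a) a z = restrict ((*) (v*u)) a z"
      proof (cases "z \<in> a")
        case True
        have "u * z \<in> rId (EE u)" using rId_idem[OF EE_idem, of "u*z" u] EE_l[of u] by (simp add: mult.assoc[symmetric])
        then show ?thesis using True by (simp add: mult.assoc)
      qed simp
    qed
    then show ?thesis using True r unfolding cone_star_def phi_def mcomp_def lam_def msrc_def mtgt_def mfun_def by simp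
  qed
qed

lemma Hset_phi:
  assumes d: "d \<in> R_obj"
  shows "Hset (phi (u::'a)) d = phi ` (d \<inter> lId (EE u))"
proof -
  obtain h where h: "idem h" "d = rId h" using d by (rule R_objE)
  define g where "g = EE u"
  have ig: "idem g" unfolding g_def by (rule EE_idem)
  show ?thesis
  proof
    show "Hset (phi u) d \<subseteq> phi ` (d \<inter> lId (EE u))"
    proof
      fix x assume "x \<in> Hset (phi u) d"
      then obtain f where f: "f \<in> R_hom (rId g) (rId h)" "x = cone_star (phi u) (epi_comp f)"
        unfolding Hset_def apex_phi g_def h by blast
      obtain v where v: "f = lam g v h" "h * v = v" "v * g = v" using R_hom_char[OF ig h(1) f(1)] by blast
      have "epi_comp f = lam g v (EE v)" using epi_comp_lam[OF ig h(1) v(2) v(3)] v(1) by simp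
      then have "x = phi (v*u)" using f(2) cone_star_phi[of v u] v(3) unfolding g_def by simp
      moreover have "v*u \<in> d" using h rId_idem[OF h(1)] v(2) by (metis mult.assoc)
      moreover have "v*u \<in> lId (EE u)" using lId_idem[OF EE_idem] EE_r[of u] by (simp add: mult.assoc)
      ultimately show "x \<in> phi ` (d \<inter> lId (EE u))" by blast
    qed
  next
    show "phi ` (d \<inter> lId (EE u)) \<subseteq> Hset (phi u) d"
    proof
      fix x assume "x \<in> phi ` (d \<inter> lId (EE u))"
      then obtain w where w: "x = phi w" "h * w = w" "w * g = w"
        using h rId_idem[OF h(1)] lId_idem[OF EE_idem] unfolding g_def by blast
      define v where "v = w * xi u"
      have v1: "h * v = v" unfolding v_def using w(2) by (simp add: mult.assoc[symmetric])
      have v2: "v * g = v" unfolding v_def g_def using xi_r[of u] by (simp add: mult.assoc)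
      have vu: "v * u = w" unfolding v_def using xi_x[of u] w(3) unfolding g_def by (simp add: mult.assoc)
      have fh: "lam g v h \<in> R_hom (rId g) (rId h)" using R_homI[OF ig h(1) v1 v2] .
      have "epi_comp (lam g v h) = lam g v (EE v)" using epi_comp_lam[OF ig h(1) v1 v2] .
      then have "x = cone_star (phi u) (epi_comp (lam g v h))" using cone_star_phi[of v u] v2 vu w(1) unfolding g_def by simp
      then show "x \<in> Hset (phi u) d" unfolding Hset_def apex_phi h using fh unfolding g_def by blast
    qed
  qed
qed


lemma lam_src: "msrc (lam e u f) = rId e" unfolding lam_def msrc_def by simp
lemma lam_fun: "x \<in> rId e \<Longrightarrow> mfun (lam e u f) x = u * x" unfolding lam_def mfun_def by simp

lemma Hmap_phi:
  assumes g: "(g::'a mor) \<in> R_mor" and x: "x \<in> Hset (phi u) (msrc g)"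
  shows "Hmap (phi u) g x = phi (mfun g (psi x))"
proof -
  obtain h k t where gg: "idem h" "idem k" "g = lam h t k" "k * t = t" "t * h = t" using g by (rule R_morE)
  define G where "G = EE u"
  have iG: "idem G" unfolding G_def by (rule EE_idem)
  have sg: "msrc g = rId h" using gg lam_src by simp
  define P where "P = (\<lambda>f. f \<in> R_hom (apex (phi u)) (msrc g) \<and> x = cone_star (phi u) (epi_comp f))"
  have ex: "\<exists>f. P f" using x unfolding Hset_def P_def by blast
  define F where "F = (SOME f. P f)"
  have PF: "P F" unfolding F_def using ex by (rule someI_ex)
  have FR: "F \<in> R_hom (rId G) (rId h)" using PF unfolding P_def apex_phi sg G_def by simp
  obtain v where v: "F = lam G v h" "h * v = v" "v * G = v" using R_hom_char[OF iG gg(1) FR] by blast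
  have "epi_comp F = lam G v (EE v)" using epi_comp_lam[OF iG gg(1) v(2) v(3)] v(1) by simp
  then have xv: "x = phi (v*u)" using PF cone_star_phi[of v u] v(3) unfolding P_def G_def by simp
  have mc: "mcomp F g = lam G (t*v) k" using mcomp_lam[OF iG v(2)] v(1) gg(3) by simp
  have tv1: "k * (t*v) = t*v" using gg(4) by (simp add: mult.assoc[symmetric])
  have tv2: "(t*v) * G = t*v" using v(3) by (simp add: mult.assoc)
  have "epi_comp (mcomp F g) = lam G (t*v) (EE (t*v))" unfolding mc by (rule epi_comp_lam[OF iG gg(2) tv1 tv2])
  then have res: "cone_star (phi u) (epi_comp (mcomp F g)) = phi (t*v*u)"
    using cone_star_phi[of "t*v" u] tv2 unfolding G_def by simp
  have "Hmap (phi u) g x = cone_star (phi u) (epi_comp (mcomp F g))"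
    unfolding Hmap_def F_def P_def using x by simp
  moreover have vuh: "v*u \<in> rId h" using rId_idem[OF gg(1)] v(2) by (simp add: mult.assoc[symmetric])
  ultimately show ?thesis using res xv gg(3) lam_fun[OF vuh, of t k] by (simp add: mult.assoc)
qed

lemma Hfun_phi: "Hfun (phi (u::'a)) = Hfun (phi (EE u))"
proof -
  have E2: "EE (EE u) = EE u" by (rule EE_of_idem[OF EE_idem])
  have hs: "\<And>d. d \<in> R_obj \<Longrightarrow> Hset (phi u) d = Hset (phi (EE u)) d" using Hset_phi E2 by simp
  have hm: "\<And>g. g \<in> R_mor \<Longrightarrow> Hmap (phi u) g = Hmap (phi (EE u)) g"
  proof -
    fix g :: "'a mor" assume g: "g \<in> R_mor"
    obtain h k t where gg: "idem h" "idem k" "g = lam h t k" "k * t = t" "t * h = t" using g by (rule R_morE)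
    have sg: "msrc g \<in> R_obj" using gg(3) lam_src[of h t k] R_objI[OF gg(1)] by simp
    show "Hmap (phi u) g = Hmap (phi (EE u)) g"
    proof (rule ext)
      fix x show "Hmap (phi u) g x = Hmap (phi (EE u)) g x"
      proof (cases "x \<in> Hset (phi u) (msrc g)")
        case True
        then show ?thesis using Hmap_phi[OF g] hs[OF sg] by simp
      next
        case False
        then show ?thesis using hs[OF sg] unfolding Hmap_def by simp
      qed
    qed
  qed
  show ?thesis unfolding Hfun_def using hs hm by (auto intro!: ext)
qed

lemma FO_lId: "idem (e::'a) \<Longrightarrow> FOd (lId e) = Hfun (phi e)"
  unfolding FOd_def using idof_lId by simp

lemma FO_fst: "idem (e::'a) \<Longrightarrow> d \<in> R_obj \<Longrightarrow> fst (FOd (lId e)) d = phi ` (d \<inter> lId e)"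
  using FO_lId Hset_phi EE_of_idem unfolding Hfun_def by simp

lemma FO_snd: "idem (e::'a) \<Longrightarrow> g \<in> R_mor \<Longrightarrow> x \<in> fst (FOd (lId e)) (msrc g)
  \<Longrightarrow> snd (FOd (lId e)) g x = phi (mfun g (psi x))"
proof -
  assume e: "idem e" and g: "g \<in> R_mor" and x: "x \<in> fst (FOd (lId e)) (msrc g)"
  obtain h k t where gg: "idem h" "idem k" "g = lam h t k" "k * t = t" "t * h = t" using g by (rule R_morE)
  have sg: "msrc g \<in> R_obj" using gg(3) lam_src[of h t k] R_objI[OF gg(1)] by simp
  show ?thesis using x Hmap_phi[OF g] e sg g FO_lId unfolding Hfun_def by simp
qed

lemma FO_le: "idem (e::'a) \<Longrightarrow> idem f \<Longrightarrow>
   (\<forall>d\<in>R_obj. fst (FOd (lId e)) d \<subseteq> fst (FOd (lId f)) d) \<longleftrightarrow> lId e \<subseteq> lId f"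
proof
  assume e: "idem e" and f: "idem f" and H: "\<forall>d\<in>R_obj. fst (FOd (lId e)) d \<subseteq> fst (FOd (lId f)) d"
  have "phi e \<in> fst (FOd (lId e)) (rId e)" using FO_fst[OF e R_objI[OF e]] self_rId[OF e] lId_rId[OF e] by simp
  then have "phi e \<in> phi ` (rId e \<inter> lId f)" using H R_objI[OF e] FO_fst[OF f R_objI[OF e]] by blast
  then have "e \<in> lId f" by auto
  then have ef: "e * f = e" using lId_idem[OF f] by simp
  show "lId e \<subseteq> lId f"
  proof
    fix x assume "x \<in> lId e"
    then have "x * e = x" using lId_idem[OF e] by simp
    then have "x * f = x" using ef by (metis mult.assoc)
    then show "x \<in> lId f" using lId_idem[OF f] by simp
  qed
next
  assume e: "idem e" and f: "idem f" and "lId e \<subseteq> lId f"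
  then show "\<forall>d\<in>R_obj. fst (FOd (lId e)) d \<subseteq> fst (FOd (lId f)) d" using FO_fst by blast
qed

lemma FO_inj: "inj_on (FOd :: 'a set \<Rightarrow> 'a nobj) L_obj"
proof (rule inj_onI)
  fix A B :: "'a set" assume A: "A \<in> L_obj" and B: "B \<in> L_obj" and eq: "FOd A = FOd B"
  obtain e where e: "idem e" "A = lId e" using A by (rule L_objE)
  obtain f where f: "idem f" "B = lId f" using B by (rule L_objE)
  have "lId e \<subseteq> lId f" using FO_le[OF e(1) f(1)] eq e f by simp
  moreover have "lId f \<subseteq> lId e" using FO_le[OF f(1) e(1)] eq e f by simp
  ultimately show "A = B" using e f by simp
qed

lemma FO_bij: "bij_betw (FOd :: 'a set \<Rightarrow> 'a nobj) L_obj N_obj"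
  unfolding bij_betw_def
proof (intro conjI FO_inj)
  show "(FOd :: 'a set \<Rightarrow> 'a nobj) ` L_obj = N_obj"
  proof
    show "(FOd :: 'a set \<Rightarrow> 'a nobj) ` L_obj \<subseteq> N_obj"
    proof
      fix F :: "'a nobj" assume "F \<in> FOd ` L_obj"
      then obtain A where A: "A \<in> L_obj" "F = FOd A" by blast
      obtain e where e: "idem e" "A = lId e" using A(1) by (rule L_objE)
      have "phi e \<in> TR" unfolding TR_def using phi_cone by blast
      then show "F \<in> N_obj" unfolding N_obj_def using e A FO_lId by simp
    qed
    show "N_obj \<subseteq> (FOd :: 'a set \<Rightarrow> 'a nobj) ` L_obj"
    proof
      fix F :: "'a nobj" assume "F \<in> N_obj"
      then obtain u where "F = Hfun (phi (u::'a))" unfolding N_obj_def using TR_phi by blast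
      then have "F = FOd (lId (EE u))" using Hfun_phi FO_lId[OF EE_idem] by simp
      then show "F \<in> FOd ` L_obj" using L_objI[OF EE_idem] by blast
    qed
  qed
qed


lemma rho_eq:
  assumes "idem (e::'a)" "idem e'" "idem f" "idem f'" "e * u = u" "e' * u' = u'"
    "rho e u f = rho e' u' f'"
  shows "e = e' \<and> f = f' \<and> u = u'"
proof -
  have r: "lId e = lId e'" "lId f = lId f'" "restrict (\<lambda>x. x*u) (lId e) = restrict (\<lambda>x. x*u') (lId e')"
    using assms(7) unfolding rho_def by auto
  have ee: "e = e'" using lId_inj assms r by blast
  have "e \<in> lId e" using lId_idem[OF assms(1)] assms(1) unfolding idem_def by simp
  then have "e * u = e * u'" using fun_cong[OF r(3), of e] ee by simp
  then have "u = u'" using ee assms(5,6) by simp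
  then show ?thesis using ee lId_inj assms r by auto
qed

lemma L_hom_char:
  assumes "idem (e::'a)" "idem f" "m \<in> L_hom (lId e) (lId f)"
  shows "\<exists>u. m = rho e u f \<and> e * u = u \<and> u * f = u"
proof -
  obtain e' u f' s where x: "idem e'" "idem f'" "u = e'*s*f'" "m = rho e' u f'" "lId e = lId e'" "lId f = lId f'"
    using assms(3) unfolding L_hom_def by blast
  have ee: "e' = e" using lId_inj[OF x(1) assms(1)] x(5) by simp
  have ff: "f' = f" using lId_inj[OF x(2) assms(2)] x(6) by simp
  have "e * u = u" using x(3) assms(1) ee unfolding idem_def by (simp add: mult.assoc[symmetric])
  moreover have "u * f = u" using x(3) assms(2) ff unfolding idem_def by (simp add: mult.assoc)
  ultimately show ?thesis using x ee ff by blast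
qed

lemma L_homI:
  assumes "idem (e::'a)" "idem f" "e * u = u" "u * f = u"
  shows "rho e u f \<in> L_hom (lId e) (lId f)"
proof -
  have "u = e * u * f" using assms by (simp add: mult.assoc)
  then show ?thesis unfolding L_hom_def using assms(1,2) by blast
qed

lemma rho_comp:
  assumes "u * f = (u::'a)"
  shows "mcomp (rho e u f) (rho f v h) = rho e (u*v) h"
proof -
  have "restrict (restrict (\<lambda>x. x*v) (lId f) \<circ> restrict (\<lambda>x. x*u) (lId e)) (lId e)
      = restrict (\<lambda>x. x*(u*v)) (lId e)"
  proof (rule ext)
    fix x show "restrict (restrict (\<lambda>x. x*v) (lId f) \<circ> restrict (\<lambda>x. x*u) (lId e)) (lId e) x
      = restrict (\<lambda>x. x*(u*v)) (lId e) x"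
    proof (cases "x \<in> lId e")
      case True
      have "x * u \<in> lId f" unfolding lId_mem using assms by (metis mult.assoc)
      then show ?thesis using True by (simp add: mult.assoc)
    qed simp
  qed
  then show ?thesis unfolding mcomp_def rho_def msrc_def mtgt_def mfun_def by simp
qed

lemma minc_rho: "idem (e::'a) \<Longrightarrow> minc (lId e) B = rho e e f \<longleftrightarrow> B = lId f"
proof -
  assume ie: "idem e"
  have "restrict (\<lambda>x. x*e) (lId e) = restrict id (lId e)"
    by (rule ext) (simp add: lId_idem[OF ie])
  then show ?thesis unfolding minc_def rho_def by simp
qed

lemma uof_rho: "idem (e::'a) \<Longrightarrow> e * u = u \<Longrightarrow> uof (rho e u f) = u"
proof -
  assume ie: "idem e" and eu: "e * u = u"
  have "e \<in> lId e" using lId_idem[OF ie] ie unfolding idem_def by simp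
  then show ?thesis unfolding uof_def rho_def msrc_def mfun_def using idof_lId[OF ie] eu by simp
qed

lemma FM_rho: "idem (e::'a) \<Longrightarrow> e * u = u \<Longrightarrow> FMd (rho e u f) = (FOd (lId e), FOd (lId f), sig e u)"
proof -
  assume e: "idem e" and eu: "e * u = u"
  have 1: "msrc (rho e u f) = lId e" "mtgt (rho e u f) = lId f" unfolding rho_def msrc_def mtgt_def by simp_all
  show ?thesis unfolding FMd_def sig_def 1 uof_rho[OF e eu, of f] by (rule refl)
qed

lemma sig_app: "idem (e::'a) \<Longrightarrow> d \<in> R_obj \<Longrightarrow> w \<in> d \<Longrightarrow> w * e = w \<Longrightarrow> sig e u d (phi w) = phi (w * u)"
proof -
  assume e: "idem e" and d: "d \<in> R_obj" "w \<in> d" "w * e = w"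
  have "phi w \<in> fst (FOd (lId e)) d" using FO_fst[OF e d(1)] d lId_idem[OF e] by blast
  then show ?thesis unfolding sig_def using d by simp
qed

lemma FM_hom:
  assumes e: "idem (e::'a)" and f: "idem f" and eu: "e * u = u" and uf: "u * f = u"
  shows "FMd (rho e u f) \<in> N_hom (FOd (lId e)) (FOd (lId f))"
proof -
  have A: "\<forall>d. d \<notin> R_obj \<longrightarrow> sig e u d = undefined" unfolding sig_def by simp
  have B: "\<forall>d\<in>R_obj. sig e u d \<in> extensional (fst (FOd (lId e)) d) \<and> sig e u d \<in> fst (FOd (lId e)) d \<rightarrow> fst (FOd (lId f)) d"
  proof (intro ballI conjI)
    fix d :: "'a set" assume d: "d \<in> R_obj"
    show "sig e u d \<in> extensional (fst (FOd (lId e)) d)" unfolding sig_def using d by simp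
    show "sig e u d \<in> fst (FOd (lId e)) d \<rightarrow> fst (FOd (lId f)) d"
    proof
      fix x assume "x \<in> fst (FOd (lId e)) d"
      then obtain w where w: "x = phi w" "w \<in> d" "w * e = w" using FO_fst[OF e d] lId_idem[OF e] by blast
      obtain h where h: "idem h" "d = rId h" using d by (rule R_objE)
      have "w * u \<in> d" using w(2) h rId_idem[OF h(1)] by (metis mult.assoc)
      moreover have "w * u * f = w * u" using uf by (simp add: mult.assoc)
      ultimately show "sig e u d x \<in> fst (FOd (lId f)) d"
        using sig_app[OF e d w(2,3)] w(1) FO_fst[OF f d] lId_idem[OF f] by blast
    qed
  qed
  have C: "\<forall>d\<in>R_obj. \<forall>d'\<in>R_obj. \<forall>g\<in>R_hom d d'. \<forall>x\<in>fst (FOd (lId e)) d.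
          snd (FOd (lId f)) g (sig e u d x) = sig e u d' (snd (FOd (lId e)) g x)"
  proof (intro ballI)
    fix d d' :: "'a set" and g x
    assume d: "d \<in> R_obj" and d': "d' \<in> R_obj" and g: "g \<in> R_hom d d'" and x: "x \<in> fst (FOd (lId e)) d"
    obtain h where h: "idem h" "d = rId h" using d by (rule R_objE)
    obtain k where k: "idem k" "d' = rId k" using d' by (rule R_objE)
    obtain t where t: "g = lam h t k" "k * t = t" "t * h = t" using R_hom_char[OF h(1) k(1)] g h k by blast
    have gm: "g \<in> R_mor" using R_morI[OF d d' g] .
    have sg: "msrc g = d" using t(1) h lam_src by simp
    obtain w where w: "x = phi w" "w \<in> d" "w * e = w" using x FO_fst[OF e d] lId_idem[OF e] by blast
    have wu: "w * u \<in> d" using w(2) h rId_idem[OF h(1)] by (metis mult.assoc)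
    have s1: "sig e u d x = phi (w*u)" using sig_app[OF e d w(2,3)] w(1) by simp
    have "phi (w*u) \<in> fst (FOd (lId f)) d" using FO_fst[OF f d] wu lId_idem[OF f] uf by (auto simp: mult.assoc)
    then have L: "snd (FOd (lId f)) g (sig e u d x) = phi (t * (w*u))"
      using FO_snd[OF f gm] sg s1 lam_fun[of _ h t k] wu h t(1) by simp
    have "snd (FOd (lId e)) g x = phi (t * w)"
      using FO_snd[OF e gm] sg x w lam_fun[of w h t k] h t(1) by simp
    moreover have "t * w \<in> d'" using k rId_idem[OF k(1)] t(2) by (metis mult.assoc)
    moreover have "t * w * e = t * w" using w(3) by (simp add: mult.assoc)
    ultimately have R: "sig e u d' (snd (FOd (lId e)) g x) = phi (t * w * u)"
      using sig_app[OF e d'] by simp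
    show "snd (FOd (lId f)) g (sig e u d x) = sig e u d' (snd (FOd (lId e)) g x)"
      using L R by (simp add: mult.assoc)
  qed
  show ?thesis unfolding N_hom_def FM_rho[OF e eu] using A B C by blast
qed


lemma L_morE: "(m::'a mor) \<in> L_mor \<Longrightarrow> (\<And>e f u. idem e \<Longrightarrow> idem f \<Longrightarrow> m = rho e u f \<Longrightarrow> e * u = u \<Longrightarrow> u * f = u \<Longrightarrow> P) \<Longrightarrow> P"
proof -
  assume m: "m \<in> L_mor" and H: "\<And>e f u. idem e \<Longrightarrow> idem f \<Longrightarrow> m = rho e u f \<Longrightarrow> e * u = u \<Longrightarrow> u * f = u \<Longrightarrow> P"
  obtain A B where AB: "A \<in> L_obj" "B \<in> L_obj" "m \<in> L_hom A B" using m unfolding L_mor_def by blast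
  obtain e where e: "idem e" "A = lId e" using AB(1) by (rule L_objE)
  obtain f where f: "idem f" "B = lId f" using AB(2) by (rule L_objE)
  have "m \<in> L_hom (lId e) (lId f)" using AB e f by simp
  then obtain u where "m = rho e u f" "e * u = u" "u * f = u" using L_hom_char[OF e(1) f(1)] by blast
  then show P using H e f by blast
qed

lemma phi_in_FO: "idem (e::'a) \<Longrightarrow> d \<in> R_obj \<Longrightarrow> w \<in> d \<Longrightarrow> w * e = w \<Longrightarrow> phi w \<in> fst (FOd (lId e)) d"
proof -
  assume e: "idem e" and d: "d \<in> R_obj" and w: "w \<in> d" "w * e = w"
  have "w \<in> d \<inter> lId e" using w lId_idem[OF e] by simp
  then show ?thesis unfolding FO_fst[OF e d] by (rule imageI)
qed

lemma in_FO_E: "idem (e::'a) \<Longrightarrow> d \<in> R_obj \<Longrightarrow> x \<in> fst (FOd (lId e)) d \<Longrightarrow>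
   (\<And>w. x = phi w \<Longrightarrow> w \<in> d \<Longrightarrow> w * e = w \<Longrightarrow> P) \<Longrightarrow> P"
proof -
  assume e: "idem e" and d: "d \<in> R_obj" and x: "x \<in> fst (FOd (lId e)) d"
    and H: "\<And>w. x = phi w \<Longrightarrow> w \<in> d \<Longrightarrow> w * e = w \<Longrightarrow> P"
  from x obtain w where "w \<in> d \<inter> lId e" "x = phi w" unfolding FO_fst[OF e d] by blast
  then show P using H lId_idem[OF e] by simp
qed

lemma FM_inj: "inj_on (FMd :: 'a mor \<Rightarrow> 'a nmor) L_mor"
proof (rule inj_onI)
  fix m m' :: "'a mor" assume m: "m \<in> L_mor" and m': "m' \<in> L_mor" and eq: "FMd m = FMd m'"
  obtain e f u where a: "idem e" "idem f" "m = rho e u f" "e * u = u" "u * f = u" using m by (rule L_morE)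
  obtain e' f' u' where b: "idem e'" "idem f'" "m' = rho e' u' f'" "e' * u' = u'" "u' * f' = u'" using m' by (rule L_morE)
  have eq2: "(FOd (lId e), FOd (lId f), sig e u) = (FOd (lId e'), FOd (lId f'), sig e' u')"
    using eq a b FM_rho by metis
  have "lId e = lId e'" using inj_onD[OF FO_inj] eq2 L_objI a(1) b(1) by auto
  then have ee: "e = e'" using lId_inj a(1) b(1) by blast
  have "lId f = lId f'" using inj_onD[OF FO_inj] eq2 L_objI a(2) b(2) by auto
  then have ff: "f = f'" using lId_inj a(2) b(2) by blast
  have ss: "sig e u = sig e u'" using eq2 ee by simp
  have er: "e \<in> rId e" using self_rId[OF a(1)] .
  have ei: "e * e = e" using a(1) unfolding idem_def .
  have "phi (e*u) = phi (e*u')" using sig_app[OF a(1) R_objI[OF a(1)] er ei, of u] sig_app[OF a(1) R_objI[OF a(1)] er ei, of u'] ss by simp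
  then have "u = u'" using a(4) b(4) ee by simp
  then show "m = m'" using a b ee ff by simp
qed

lemma FM_image: "(FMd :: 'a mor \<Rightarrow> 'a nmor) ` L_mor = N_mor"
proof
  show "(FMd :: 'a mor \<Rightarrow> 'a nmor) ` L_mor \<subseteq> N_mor"
  proof
    fix X :: "'a nmor" assume "X \<in> FMd ` L_mor"
    then obtain m where m: "m \<in> L_mor" "X = FMd m" by blast
    obtain e f u where a: "idem e" "idem f" "m = rho e u f" "e * u = u" "u * f = u" using m(1) by (rule L_morE)
    have "X \<in> N_hom (FOd (lId e)) (FOd (lId f))" using FM_hom[OF a(1,2,4,5)] a(3) m(2) by simp
    moreover have "FOd (lId e) \<in> N_obj" "FOd (lId f) \<in> N_obj"
      using FO_bij L_objI a(1,2) unfolding bij_betw_def by blast+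
    ultimately show "X \<in> N_mor" unfolding N_mor_def by blast
  qed
next
  show "N_mor \<subseteq> (FMd :: 'a mor \<Rightarrow> 'a nmor) ` L_mor"
  proof
    fix X :: "'a nmor" assume "X \<in> N_mor"
    then obtain F G where FG: "F \<in> N_obj" "G \<in> N_obj" "X \<in> N_hom F G" unfolding N_mor_def by blast
    obtain A where A: "A \<in> L_obj" "F = FOd A" using FG(1) FO_bij unfolding bij_betw_def by blast
    obtain B where B: "B \<in> L_obj" "G = FOd B" using FG(2) FO_bij unfolding bij_betw_def by blast
    obtain e where e: "idem e" "A = lId e" using A(1) by (rule L_objE)
    obtain f where f: "idem f" "B = lId f" using B(1) by (rule L_objE)
    obtain \<sigma> where X: "X = (F, G, \<sigma>)"
      and s1: "\<forall>d. d \<notin> R_obj \<longrightarrow> \<sigma> d = undefined"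
      and s2: "\<forall>d\<in>R_obj. \<sigma> d \<in> extensional (fst F d) \<and> \<sigma> d \<in> fst F d \<rightarrow> fst G d"
      and s3: "\<forall>d\<in>R_obj. \<forall>d'\<in>R_obj. \<forall>g\<in>R_hom d d'. \<forall>x\<in>fst F d. snd G g (\<sigma> d x) = \<sigma> d' (snd F g x)"
      using FG(3) unfolding N_hom_def by blast
    have d0: "rId e \<in> R_obj" using R_objI[OF e(1)] .
    have ei: "e * e = e" using e(1) unfolding idem_def .
    have x0: "phi e \<in> fst F (rId e)" using phi_in_FO[OF e(1) d0 self_rId[OF e(1)] ei] A e by simp
    have "\<sigma> (rId e) (phi e) \<in> fst G (rId e)" using s2 d0 x0 by blast
    then obtain u0 where u0: "\<sigma> (rId e) (phi e) = phi u0" "u0 \<in> rId e" "u0 * f = u0"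
      using in_FO_E[OF f(1) d0] B f by metis
    have eu0: "e * u0 = u0" using u0(2) rId_idem[OF e(1)] by simp
    have mL: "rho e u0 f \<in> L_mor" unfolding L_mor_def using L_homI[OF e(1) f(1) eu0 u0(3)] L_objI e f by blast
    have "sig e u0 = \<sigma>"
    proof (rule ext)
      fix d :: "'a set" show "sig e u0 d = \<sigma> d"
      proof (cases "d \<in> R_obj")
        case False then show ?thesis using s1 unfolding sig_def by simp
      next
        case True
        obtain h where h: "idem h" "d = rId h" using True by (rule R_objE)
        show ?thesis
        proof (rule ext)
          fix x show "sig e u0 d x = \<sigma> d x"
          proof (cases "x \<in> fst F d")
            case False
            then show ?thesis using s2 True A e unfolding sig_def extensional_def by auto
          next
            case xin: True
            then obtain w where w: "x = phi w" "w \<in> d" "w * e = w" using in_FO_E[OF e(1) True] A e by metis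
            have hw: "h * w = w" using w(2) h rId_idem[OF h(1)] by simp
            have gR: "lam e w h \<in> R_hom (rId e) d" using R_homI[OF e(1) h(1) hw w(3)] h by simp
            have gm: "lam e w h \<in> R_mor" using R_morI[OF d0 True gR] .
            have sg: "msrc (lam e w h) = rId e" by (rule lam_src)
            have nat: "snd G (lam e w h) (\<sigma> (rId e) (phi e)) = \<sigma> d (snd F (lam e w h) (phi e))"
              using s3 d0 True gR x0 by blast
            have "snd F (lam e w h) (phi e) = phi (w * e)"
              using FO_snd[OF e(1) gm] x0 A e sg lam_fun[OF self_rId[OF e(1)]] by simp
            then have r1: "snd F (lam e w h) (phi e) = x" using w by simp
            have "phi u0 \<in> fst G (rId e)" using u0(1) \<open>\<sigma> (rId e) (phi e) \<in> fst G (rId e)\<close> by simp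
            then have "snd G (lam e w h) (phi u0) = phi (w * u0)"
              using FO_snd[OF f(1) gm] B f sg lam_fun[OF u0(2)] by simp
            then have "\<sigma> d x = phi (w * u0)" using nat r1 u0(1) by simp
            moreover have "sig e u0 d x = phi (w * u0)" using sig_app[OF e(1) True w(2) w(3)] w(1) by simp
            ultimately show ?thesis by simp
          qed
        qed
      qed
    qed
    then have "X = FMd (rho e u0 f)" using FM_rho[OF e(1) eu0] X A B e f by simp
    then show "X \<in> FMd ` L_mor" using mL by blast
  qed
qed

lemma FM_comp:
  assumes "A \<in> L_obj" "B \<in> L_obj" "C \<in> L_obj" "(m::'a mor) \<in> L_hom A B" "n \<in> L_hom B C"
  shows "FMd (mcomp m n) = N_comp (FMd m) (FMd n)"
proof -
  obtain e where e: "idem e" "A = lId e" using assms(1) by (rule L_objE)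
  obtain f where f: "idem f" "B = lId f" using assms(2) by (rule L_objE)
  obtain h where h: "idem h" "C = lId h" using assms(3) by (rule L_objE)
  obtain u where u: "m = rho e u f" "e * u = u" "u * f = u" using L_hom_char[OF e(1) f(1)] assms(4) e f by blast
  obtain v where v: "n = rho f v h" "f * v = v" "v * h = v" using L_hom_char[OF f(1) h(1)] assms(5) f h by blast
  have mc: "mcomp (rho e u f) (rho f v h) = rho e (u*v) h" using rho_comp[OF u(3)] by simp
  have euv: "e * (u*v) = u*v" using u(2) by (simp add: mult.assoc[symmetric])
  have "sig e (u*v) = (\<lambda>d. if d \<in> R_obj then restrict (sig f v d \<circ> sig e u d) (fst (FOd (lId e)) d) else undefined)"
  proof (rule ext)
    fix d :: "'a set" show "sig e (u*v) d = (if d \<in> R_obj then restrict (sig f v d \<circ> sig e u d) (fst (FOd (lId e)) d) else undefined)"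
    proof (cases "d \<in> R_obj")
      case False then show ?thesis unfolding sig_def by simp
    next
      case True
      obtain k where k: "idem k" "d = rId k" using True by (rule R_objE)
      show ?thesis
      proof (rule ext)
        fix x show "sig e (u*v) d x = (if d \<in> R_obj then restrict (sig f v d \<circ> sig e u d) (fst (FOd (lId e)) d) else undefined) x"
        proof (cases "x \<in> fst (FOd (lId e)) d")
          case False then show ?thesis using True unfolding sig_def by simp
        next
          case xin: True
          then obtain w where w: "x = phi w" "w \<in> d" "w * e = w" using in_FO_E[OF e(1) True] by metis
          have wu: "w * u \<in> d" using w(2) k rId_idem[OF k(1)] by (metis mult.assoc)
          have wuf: "w * u * f = w * u" using u(3) by (simp add: mult.assoc)
          have "sig f v d (sig e u d x) = phi (w*u*v)"
            using sig_app[OF e(1) True w(2,3)] sig_app[OF f(1) True wu wuf] w(1) by simp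
          moreover have "sig e (u*v) d x = phi (w*(u*v))" using sig_app[OF e(1) True w(2,3)] w(1) by simp
          ultimately show ?thesis using True xin by (simp add: mult.assoc)
        qed
      qed
    qed
  qed
  then show ?thesis unfolding u(1) v(1) mc N_comp_def FM_rho[OF e(1) euv] FM_rho[OF e(1) u(2)] FM_rho[OF f(1) v(2)] prod.sel
    by simp
qed

lemma FM_inc:
  assumes "A \<in> L_obj" "B \<in> L_obj"
  shows "(A \<subseteq> B \<longleftrightarrow> N_le (FOd A) (FOd (B::'a set))) \<and> (A \<subseteq> B \<longrightarrow> FMd (minc A B) = N_inc (FOd A) (FOd B))"
proof -
  obtain e where e: "idem e" "A = lId e" using assms(1) by (rule L_objE)
  obtain f where f: "idem f" "B = lId f" using assms(2) by (rule L_objE)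
  have 1: "A \<subseteq> B \<longleftrightarrow> N_le (FOd A) (FOd B)" unfolding N_le_def using FO_le[OF e(1) f(1)] e f by simp
  have 2: "FMd (minc A B) = N_inc (FOd A) (FOd B)" if AB: "A \<subseteq> B"
  proof -
    have ei: "e * e = e" using e(1) unfolding idem_def .
    have mi: "minc A B = rho e e f" using minc_rho[OF e(1)] e f by simp
    have "sig e e = (\<lambda>d. if d \<in> R_obj then restrict id (fst (FOd A) d) else undefined)"
    proof (rule ext)
      fix d :: "'a set" show "sig e e d = (if d \<in> R_obj then restrict id (fst (FOd A) d) else undefined)"
      proof (cases "d \<in> R_obj")
        case False then show ?thesis unfolding sig_def by simp
      next
        case True
        show ?thesis
        proof (rule ext)
          fix x show "sig e e d x = (if d \<in> R_obj then restrict id (fst (FOd A) d) else undefined) x"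
          proof (cases "x \<in> fst (FOd (lId e)) d")
            case False then show ?thesis using True e unfolding sig_def by simp
          next
            case xin: True
            then obtain w where w: "x = phi w" "w \<in> d" "w * e = w" using in_FO_E[OF e(1) True] by metis
            show ?thesis using sig_app[OF e(1) True w(2,3)] w xin True e by simp
          qed
        qed
      qed
    qed
    then show ?thesis unfolding mi FM_rho[OF e(1) ei] N_inc_def using e f by simp
  qed
  show ?thesis using 1 2 by blast
qed

lemma cat_iso: "normal_cat_iso (FOd :: 'a set \<Rightarrow> 'a nobj) FMd"
proof -
  have P1: "bij_betw (FMd :: 'a mor \<Rightarrow> 'a nmor) L_mor N_mor" unfolding bij_betw_def using FM_inj FM_image by blast
  have P2: "\<forall>A\<in>L_obj. \<forall>B\<in>L_obj. \<forall>m\<in>L_hom A B. FMd m \<in> N_hom (FOd A) (FOd (B::'a set))"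
  proof (intro ballI)
    fix A B :: "'a set" and m assume A: "A \<in> L_obj" and B: "B \<in> L_obj" and m: "m \<in> L_hom A B"
    obtain e where e: "idem e" "A = lId e" using A by (rule L_objE)
    obtain f where f: "idem f" "B = lId f" using B by (rule L_objE)
    obtain u where u: "m = rho e u f" "e * u = u" "u * f = u" using L_hom_char[OF e(1) f(1)] m e f by blast
    show "FMd m \<in> N_hom (FOd A) (FOd B)" using FM_hom[OF e(1) f(1) u(2,3)] u(1) e f by simp
  qed
  have P3: "\<forall>A\<in>L_obj. \<forall>B\<in>L_obj. \<forall>C\<in>L_obj. \<forall>m\<in>L_hom A B. \<forall>n\<in>L_hom B C.
          FMd (mcomp m n) = N_comp (FMd m) (FMd (n::'a mor))"
    using FM_comp by blast
  have P4: "\<forall>A\<in>L_obj. \<forall>B\<in>L_obj. (A \<subseteq> B \<longleftrightarrow> N_le (FOd A) (FOd B))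
          \<and> (A \<subseteq> B \<longrightarrow> FMd (minc A B) = N_inc (FOd A) (FOd (B::'a set)))"
    using FM_inc by blast
  show ?thesis unfolding normal_cat_iso_def using FO_bij P1 P2 P3 P4 by blast
qed

end

theorem mainTheorem7:
  assumes "clifford_semigroup TYPE('a::semigroup_mult)"
  shows "(\<exists>\<phi> :: 'a \<Rightarrow> 'a cone. bij_betw \<phi> UNIV TR
            \<and> (\<forall>x y. \<phi> (x * y) = cone_mult (\<phi> y) (\<phi> x)))
       \<and> (\<exists>(FO :: 'a set \<Rightarrow> 'a nobj) FM. normal_cat_iso FO FM)"
proof -
  interpret cliff "TYPE('a)" by unfold_locales (rule assms)
  show ?thesis using phi_bij phi_anti cat_iso by blast
qed


end
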